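(* Let $f$ be a non-degenerate $C^2$ function on $\mathbb R$ and let $F$ be a $C^1$ function on $\mathbb R$ with $\lim_{x\to-\infty}F(x)=-1$ and $\lim_{x\to+\infty}F(x)=1$. Let $a<b$ with $f(a)f(b)\neq0$. Then $$\mathcal H^0(\{f=0\}\cap[a,b])=\frac12\Big[F\Big(\frac{f'}{f}(b)\Big)-F\Big(\frac{f'}{f}(a)\Big)-\int_a^bF'\Big(\frac{f'(x)}{f(x)}\Big)\Big(\frac{f'(x)}{f(x)}\Big)'dx\Big].$$ In particular, if $a$ and $b$ are points of local extrema of $f$ (so $f'(a)=f'(b)=0$), then $$\mathcal H^0(\{f=0\}\cap[a,b])=-\frac12\int_a^bF'\Big(\frac{f'(x)}{f(x)}\Big)\Big(\frac{f'(x)}{f(x)}\Big)'dx.$$ Here the integrand is defined where $f(x)\neq0$ and the integral is the sum of the (improper) integrals over the finitely many open intervals of $[a,b]$ between consecutive zeros of $f$.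
   Context: $\mathcal H^0(\{f=0\}\cap[a,b])$ is the number of zeros of $f$ in $[a,b]$. A $C^1$ function $f$ on $\mathbb R$ is non-degenerate if there is no $x$ with $f(x)=f'(x)=0$ (equivalently $\sqrt{f^2+f'^2}$ has positive minimum on every compact set). *)

theory Defs
  imports "HOL-Analysis.Analysis"
begin

definition has_improper_integral_open :: "(real \<Rightarrow> real) \<Rightarrow> real \<Rightarrow> real \<Rightarrow> real \<Rightarrow> bool" where
  "has_improper_integral_open g c d I \<longleftrightarrow>
     (\<forall>s t. c < s \<and> s \<le> t \<and> t < d \<longrightarrow> g integrable_on {s..t}) \<and>
     ((\<lambda>p. integral {fst p..snd p} g) \<longlongrightarrow> I) (at_right c \<times>\<^sub>F at_left d)"

definition zero_partition :: "(real \<Rightarrow> real) \<Rightarrow> real \<Rightarrow> real \<Rightarrow> real list" where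
  "zero_partition f a b = sorted_list_of_set ({a, b} \<union> {x \<in> {a..b}. f x = 0})"

end

theory Submission imports Defs "HOL-Real_Asymp.Real_Asymp" begin

lemma ev_nonzero:
  fixes f f' :: "real \<Rightarrow> real"
  assumes fd: "\<And>x. (f has_real_derivative f' x) (at x)"
    and nd: "\<And>x. \<not> (f x = 0 \<and> f' x = 0)"
  shows "eventually (\<lambda>y. f y \<noteq> 0) (at x)"
proof (cases "f x = 0")
  case True
  have "((\<lambda>y. (f y - f x) / (y - x)) \<longlongrightarrow> f' x) (at x)"
    using fd[of x] by (simp add: has_field_derivative_iff)
  moreover have "f' x \<noteq> 0" using nd True by blast
  ultimately have "eventually (\<lambda>y. (f y - f x) / (y - x) \<noteq> 0) (at x)"
    using tendsto_imp_eventually_ne by blast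
  then show ?thesis by eventually_elim (use True in auto)
next
  case False
  have "isCont f x" using fd[of x] by (simp add: DERIV_isCont)
  then have "(f \<longlongrightarrow> f x) (at x)" by (simp add: isCont_def)
  then show ?thesis using False tendsto_imp_eventually_ne by blast
qed

lemma zeros_finite:
  fixes f f' :: "real \<Rightarrow> real"
  assumes fd: "\<And>x. (f has_real_derivative f' x) (at x)"
    and nd: "\<And>x. \<not> (f x = 0 \<and> f' x = 0)"
  shows "finite {x \<in> {a..b}. f x = 0}"
proof (rule ccontr)
  assume inf: "infinite {x \<in> {a..b}. f x = 0}"
  have "compact {a..b::real}" by simp
  then obtain x where "x islimpt {x \<in> {a..b}. f x = 0}"
    using inf unfolding compact_eq_Bolzano_Weierstrass by blast
  then have "\<not> eventually (\<lambda>y. y \<notin> {x \<in> {a..b}. f x = 0}) (at x)"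
    by (simp add: islimpt_iff_eventually)
  moreover have "eventually (\<lambda>y. y \<notin> {x \<in> {a..b}. f x = 0}) (at x)"
    using ev_nonzero[OF fd nd, of x] by eventually_elim auto
  ultimately show False by blast
qed

lemma lim_right_zero:
  fixes f f' :: "real \<Rightarrow> real"
  assumes fd: "\<And>x. (f has_real_derivative f' x) (at x)"
    and f'c: "continuous_on UNIV f'"
    and nd: "\<And>x. \<not> (f x = 0 \<and> f' x = 0)"
    and fc: "f c = 0"
  shows "filterlim (\<lambda>s. f' s / f s) at_top (at_right c)"
    and "filterlim (\<lambda>s. f' s / f s) at_bot (at_left c)"
proof -
  have q: "((\<lambda>y. (f y - f c) / (y - c)) \<longlongrightarrow> f' c) (at c)"
    using fd[of c] by (simp add: has_field_derivative_iff)
  have nz: "f' c \<noteq> 0" using nd fc by blast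
  have "(f' \<longlongrightarrow> f' c) (at c)" using f'c
    by (meson UNIV_I continuous_on_def tendsto_at_iff_tendsto_nhds tendsto_mono at_le)
  then have l: "((\<lambda>y. f' y / ((f y - f c) / (y - c))) \<longlongrightarrow> f' c / f' c) (at c)"
    using q nz by (intro tendsto_divide) auto
  have eq: "f' s / f s = f' s / ((f s - f c) / (s - c)) * (1 / (s - c))" if "s \<noteq> c" for s
    using that fc by (cases "f s = 0") (simp_all add: field_simps)
  have l1: "((\<lambda>y. f' y / ((f y - f c) / (y - c))) \<longlongrightarrow> 1) (at c)" using l nz by simp
  have r: "filterlim (\<lambda>s. 1 / (s - c)) at_top (at_right c)" by real_asymp
  have r2: "filterlim (\<lambda>s. 1 / (s - c)) at_bot (at_left c)" by real_asymp
  have "filterlim (\<lambda>s. f' s / ((f s - f c) / (s - c)) * (1 / (s - c))) at_top (at_right c)"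
    by (rule filterlim_tendsto_pos_mult_at_top[OF tendsto_mono[OF at_le[of "{c<..}"] l1] _ r]) auto
  then show "filterlim (\<lambda>s. f' s / f s) at_top (at_right c)"
    by (rule filterlim_cong[THEN iffD1, rotated 3])
       (auto simp: eq eventually_at_filter intro!: always_eventually)
  have "filterlim (\<lambda>s. f' s / ((f s - f c) / (s - c)) * (1 / (s - c))) at_bot (at_left c)"
    by (rule filterlim_tendsto_pos_mult_at_bot[OF tendsto_mono[OF at_le[of "{..<c}"] l1] _ r2]) auto
  then show "filterlim (\<lambda>s. f' s / f s) at_bot (at_left c)"
    by (rule filterlim_cong[THEN iffD1, rotated 3])
       (auto simp: eq eventually_at_filter intro!: always_eventually)
qed

lemma interval_integral:
  fixes f f' f'' F F' :: "real \<Rightarrow> real"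
  assumes fd: "\<And>x. (f has_real_derivative f' x) (at x)"
    and f'd: "\<And>x. (f' has_real_derivative f'' x) (at x)"
    and Fd: "\<And>x. (F has_real_derivative F' x) (at x)"
    and cd: "c < d"
    and nz: "\<And>x. c < x \<Longrightarrow> x < d \<Longrightarrow> f x \<noteq> 0"
    and L: "((\<lambda>s. F (f' s / f s)) \<longlongrightarrow> Lv) (at_right c)"
    and R: "((\<lambda>s. F (f' s / f s)) \<longlongrightarrow> Rv) (at_left d)"
  shows "has_improper_integral_open (\<lambda>x. F' (f' x / f x) * deriv (\<lambda>y. f' y / f y) x) c d (Rv - Lv)"
proof -
  define g where "g = (\<lambda>x. F' (f' x / f x) * deriv (\<lambda>y. f' y / f y) x)"
  have D: "((\<lambda>x. F (f' x / f x)) has_real_derivative g x) (at x)" if "c < x" "x < d" for x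
  proof -
    have fx: "f x \<noteq> 0" using nz that by blast
    have h: "((\<lambda>y. f' y / f y) has_real_derivative (f'' x * f x - f' x * f' x) / (f x * f x)) (at x)"
      using DERIV_divide[OF f'd fd fx] .
    then have "deriv (\<lambda>y. f' y / f y) x = (f'' x * f x - f' x * f' x) / (f x * f x)"
      by (rule DERIV_imp_deriv)
    then show ?thesis unfolding g_def using DERIV_chain2[OF Fd h] by simp
  qed
  have I: "(g has_integral (F (f' t / f t) - F (f' s / f s))) {s..t}" if "c < s" "s \<le> t" "t < d" for s t
  proof -
    have "(g has_integral ((\<lambda>x. F (f' x / f x)) t - (\<lambda>x. F (f' x / f x)) s)) {s..t}"
    proof (rule fundamental_theorem_of_calculus[OF \<open>s \<le> t\<close>])
    fix x assume "x \<in> {s..t}"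
    then have "c < x" "x < d" using that by auto
    from D[OF this] show "((\<lambda>x. F (f' x / f x)) has_vector_derivative g x) (at x within {s..t})"
      unfolding has_real_derivative_iff_has_vector_derivative[symmetric]
      by (rule has_field_derivative_at_within)
    qed
    then show ?thesis by simp
  qed
  define m where "m = (c + d) / 2"
  have ev: "eventually (\<lambda>p. c < fst p \<and> fst p \<le> snd p \<and> snd p < d) (at_right c \<times>\<^sub>F at_left d)"
  proof -
    have e1: "eventually (\<lambda>s. c < s \<and> s < m) (at_right c)"
      unfolding eventually_at_right_field using cd m_def by (intro exI[of _ m]) auto
    have e2: "eventually (\<lambda>t. m < t \<and> t < d) (at_left d)"
      unfolding eventually_at_left_field using cd m_def by (intro exI[of _ m]) auto
    show ?thesis unfolding eventually_prod_filter
      using e1 e2 by (intro exI[of _ "\<lambda>s. c < s \<and> s < m"] exI[of _ "\<lambda>t. m < t \<and> t < d"]) auto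
  qed
  have T: "((\<lambda>p. F (f' (snd p) / f (snd p)) - F (f' (fst p) / f (fst p))) \<longlongrightarrow> Rv - Lv) (at_right c \<times>\<^sub>F at_left d)"
    by (intro tendsto_diff filterlim_compose[OF R filterlim_snd] filterlim_compose[OF L filterlim_fst])
  have "((\<lambda>p. integral {fst p..snd p} g) \<longlongrightarrow> Rv - Lv) (at_right c \<times>\<^sub>F at_left d)"
    apply (rule tendsto_cong[THEN iffD1, OF _ T])
    using ev by eventually_elim (use I in \<open>auto intro!: integral_unique[symmetric]\<close>)
  moreover have "\<forall>s t. c < s \<and> s \<le> t \<and> t < d \<longrightarrow> g integrable_on {s..t}"
    using I by blast
  ultimately show ?thesis unfolding has_improper_integral_open_def g_def by blast
qed

theorem proposition3:
  fixes f f' f'' F F' :: "real \<Rightarrow> real" and a b :: real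
  assumes f_deriv: "\<And>x. (f has_real_derivative f' x) (at x)"
    and f'_deriv: "\<And>x. (f' has_real_derivative f'' x) (at x)"
    and f''_cont: "continuous_on UNIV f''"
    and nondeg: "\<And>x. \<not> (f x = 0 \<and> f' x = 0)"
    and F_deriv: "\<And>x. (F has_real_derivative F' x) (at x)"
    and F'_cont: "continuous_on UNIV F'"
    and F_bot: "(F \<longlongrightarrow> -1) at_bot"
    and F_top: "(F \<longlongrightarrow> 1) at_top"
    and ab: "a < b"
    and fab: "f a * f b \<noteq> 0"
  shows "finite {x \<in> {a..b}. f x = 0} \<and>
    (let ps = zero_partition f a b;
         g = (\<lambda>x. F' (f' x / f x) * deriv (\<lambda>y. f' y / f y) x)
     in \<exists>I :: nat \<Rightarrow> real.
          (\<forall>i. Suc i < length ps \<longrightarrow> has_improper_integral_open g (ps ! i) (ps ! Suc i) (I i)) \<and>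
          real (card {x \<in> {a..b}. f x = 0}) =
            1/2 * (F (f' b / f b) - F (f' a / f a) - (\<Sum>i < length ps - 1. I i)) \<and>
          (f' a = 0 \<and> f' b = 0 \<longrightarrow>
            real (card {x \<in> {a..b}. f x = 0}) = - 1/2 * (\<Sum>i < length ps - 1. I i)))"
proof -
  define Z where "Z = {x \<in> {a..b}. f x = 0}"
  have finZ: "finite Z" unfolding Z_def by (rule zeros_finite[OF f_deriv nondeg])
  define n where "n = card Z"
  define S where "S = insert a (insert b Z)"
  define ps where "ps = sorted_list_of_set S"
  have ps_def': "zero_partition f a b = ps"
    unfolding zero_partition_def ps_def S_def Z_def by (metis insert_is_Un Un_insert_left)
  have fa: "f a \<noteq> 0" and fb: "f b \<noteq> 0" using fab by auto
  have aZ: "a \<notin> Z" and bZ: "b \<notin> Z" using fa fb unfolding Z_def by auto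
  have finS: "finite S" using finZ unfolding S_def by simp
  have len: "length ps = n + 2"
    unfolding ps_def n_def S_def using finZ aZ bZ ab by simp
  have setps: "set ps = S" unfolding ps_def using finS by simp
  have sw: "sorted_wrt (<) ps" unfolding ps_def by (rule strict_sorted_list_of_set)
  have Sab: "S \<subseteq> {a..b}" unfolding S_def Z_def using ab by auto
  have mem: "ps ! i \<in> S" if "i < length ps" for i using that setps nth_mem by blast
  have lt: "ps ! i < ps ! j" if "i < j" "j < length ps" for i j
    using sw that sorted_wrt_nth_less by blast
  have lt_rev: "i < j" if "ps ! i < ps ! j" "i < length ps" "j < length ps" for i j
  proof (rule ccontr)
    assume "\<not> i < j"
    then have "j < i \<or> j = i" by auto
    then show False using lt[of j i] that by auto
  qed
  have p0: "ps ! 0 = a"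
  proof -
    have "a \<in> set ps" using setps S_def by auto
    then obtain j where j: "j < length ps" "ps ! j = a" by (auto simp: in_set_conv_nth)
    have "ps ! 0 \<le> a" using j lt[of 0 j] by (cases "j = 0") auto
    moreover have "a \<le> ps ! 0" using mem[of 0] Sab len by auto
    ultimately show ?thesis by simp
  qed
  have pl: "ps ! (n + 1) = b"
  proof -
    have "b \<in> set ps" using setps S_def by auto
    then obtain j where j: "j < length ps" "ps ! j = b" by (auto simp: in_set_conv_nth)
    have "b \<le> ps ! (n + 1)" using j lt[of j "n+1"] len by (cases "j = n + 1") auto
    moreover have "ps ! (n + 1) \<le> b" using mem[of "n+1"] Sab len by auto
    ultimately show ?thesis by simp
  qed
  have interior: "f (ps ! i) = 0" if "0 < i" "i < n + 1" for i
  proof -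
    have "ps ! i \<in> S" using mem that len by simp
    moreover have "ps ! i \<noteq> a" using lt[of 0 i] that len p0 by simp
    moreover have "ps ! i \<noteq> b" using lt[of i "n+1"] that len pl by simp
    ultimately show ?thesis unfolding S_def Z_def by auto
  qed
  have gap: "f x \<noteq> 0" if "i \<le> n" "ps ! i < x" "x < ps ! Suc i" for i x
  proof
    assume fx: "f x = 0"
    have "a \<le> ps ! i" using mem[of i] Sab len that by auto
    moreover have "ps ! Suc i \<le> b" using mem[of "Suc i"] Sab len that by auto
    ultimately have "x \<in> Z" using fx that unfolding Z_def by auto
    then have "x \<in> set ps" using setps S_def by auto
    then obtain j where j: "j < length ps" "ps ! j = x" by (auto simp: in_set_conv_nth)
    have "i < j" using lt_rev[of i j] j that len by auto
    moreover have "j < Suc i" using lt_rev[of j "Suc i"] j that len by auto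
    ultimately show False by simp
  qed
  have f'c: "continuous_on UNIV f'"
    using f'_deriv by (meson DERIV_isCont continuous_at_imp_continuous_on)
  have contlim: "((\<lambda>s. F (f' s / f s)) \<longlongrightarrow> F (f' c / f c)) (at c)" if "f c \<noteq> 0" for c
  proof -
    have "isCont (\<lambda>s. f' s / f s) c"
      using that f_deriv[of c] f'_deriv[of c] by (intro isCont_divide) (auto intro: DERIV_isCont)
    then have "isCont (\<lambda>s. F (f' s / f s)) c"
      using DERIV_isCont[OF F_deriv] continuous_at_compose[of c "\<lambda>s. f' s / f s" F]
      by (simp add: o_def)
    then show ?thesis by (simp add: isCont_def)
  qed
  define Lv where "Lv i = (if i = 0 then F (f' a / f a) else 1)" for i :: nat
  define Rv where "Rv i = (if i = n then F (f' b / f b) else -1)" for i :: nat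
  define I where "I i = Rv i - Lv i" for i
  have integrals: "has_improper_integral_open (\<lambda>x. F' (f' x / f x) * deriv (\<lambda>y. f' y / f y) x)
      (ps ! i) (ps ! Suc i) (I i)" if "Suc i < length ps" for i
  proof -
    have iN: "i \<le> n" using that len by simp
    have L: "((\<lambda>s. F (f' s / f s)) \<longlongrightarrow> Lv i) (at_right (ps ! i))"
    proof (cases "i = 0")
      case True
      then show ?thesis using contlim[OF fa] p0 unfolding Lv_def
        by (auto simp: filterlim_at_split)
    next
      case False
      then have "f (ps ! i) = 0" using interior iN by simp
      from filterlim_compose[OF F_top lim_right_zero(1)[OF f_deriv f'c nondeg this]]
      show ?thesis using False unfolding Lv_def by simp
    qed
    have R: "((\<lambda>s. F (f' s / f s)) \<longlongrightarrow> Rv i) (at_left (ps ! Suc i))"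
    proof (cases "i = n")
      case True
      then show ?thesis using contlim[OF fb] pl unfolding Rv_def
        by (auto simp: filterlim_at_split)
    next
      case False
      then have "f (ps ! Suc i) = 0" using interior iN by simp
      from filterlim_compose[OF F_bot lim_right_zero(2)[OF f_deriv f'c nondeg this]]
      show ?thesis using False unfolding Rv_def by simp
    qed
    show ?thesis unfolding I_def
      by (rule interval_integral[OF f_deriv f'_deriv F_deriv lt[of i "Suc i"] _ L R])
         (use that gap iN in auto)
  qed
  have sumR: "(\<Sum>i < Suc n. Rv i) = F (f' b / f b) - real n"
  proof -
    have "(\<Sum>i < n. Rv i) = (\<Sum>i < n. -1)" by (rule sum.cong) (auto simp: Rv_def)
    then show ?thesis by (simp add: Rv_def)
  qed
  have sumL: "(\<Sum>i < Suc n. Lv i) = F (f' a / f a) + real n"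
    by (subst sum.lessThan_Suc_shift) (simp add: Lv_def)
  have sumI: "(\<Sum>i < length ps - 1. I i) = F (f' b / f b) - F (f' a / f a) - 2 * real n"
    using len sumR sumL by (simp add: I_def sum_subtractf)
  show ?thesis
    unfolding Let_def ps_def' Z_def[symmetric] n_def[symmetric]
    using finZ integrals sumI by (intro conjI exI[of _ I]) auto
qed

end
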